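(* Let $T>0$, $s_0\ge0$ and $S>3/2$. There is a constant $C(S)$ depending only on $S$ such that for every $m\in\mathbb{N}$ and every $v^0\in\dot H^{s_0}$, the solution $v^{(m)}$ of the Galerkin system described in the context with $v^{(m)}(0)=v^0$ satisfies $$\|\partial_t v^{(m)}(t)\|_{\dot H^{-S}}\le C(S)\,\|v^0\|_{\dot H^0}^2,$$ uniformly in $m$, $T$ and $s_0$.
   Context: Write $\mathbb{Z}_0=\mathbb{Z}\setminus\{0\}$. For $s\in\mathbb{R}$, $\dot H^s$ denotes the Hilbert space of sequences $v=(v_k)_{k\in\mathbb{Z}_0}$ of complex numbers with $v_{-k}=\overline{v_k}$ and $\|v\|_{\dot H^s}^2=\sum_{k\in\mathbb{Z}_0}|k|^{2s}|v_k|^2<\infty$. For $m\in\mathbb{N}$ the Galerkin (truncated) KdV system is: for $k\in\mathbb{Z}_0$, $$\partial_t v^{(m)}_k=\begin{cases}\tfrac12 ik\sum_{k_1+k_2=k,\ k_1,k_2\in\mathbb{Z}_0,\ |k_1|,|k_2|\le m}e^{3ikk_1k_2t}v^{(m)}_{k_1}v^{(m)}_{k_2},&|k|\le m,\\ 0,&|k|>m,\end{cases}\qquad v^{(m)}(0)=v^0;$$ its solutions exist for all $t\ge0$. *)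

theory Defs
  imports "HOL-Analysis.Analysis"
begin

text \<open>Index set Z_0 = Z minus {0}. Sequences are functions int => complex;
  the value at index 0 is irrelevant.\<close>
definition Z0 :: "int set" where
  "Z0 = {k. k \<noteq> 0}"

definition hdot_norm_sq :: "real \<Rightarrow> (int \<Rightarrow> complex) \<Rightarrow> real" where
  "hdot_norm_sq s v = (\<Sum>\<^sub>\<infinity>k\<in>Z0. \<bar>real_of_int k\<bar> powr (2 * s) * (cmod (v k))\<^sup>2)"

definition hdot_norm :: "real \<Rightarrow> (int \<Rightarrow> complex) \<Rightarrow> real" where
  "hdot_norm s v = sqrt (hdot_norm_sq s v)"

definition in_Hdot :: "real \<Rightarrow> (int \<Rightarrow> complex) \<Rightarrow> bool" where
  "in_Hdot s v \<longleftrightarrow> (\<forall>k\<in>Z0. v (-k) = cnj (v k)) \<and>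
     (\<lambda>k. \<bar>real_of_int k\<bar> powr (2 * s) * (cmod (v k))\<^sup>2) summable_on Z0"

definition galerkin_rhs :: "nat \<Rightarrow> real \<Rightarrow> (int \<Rightarrow> complex) \<Rightarrow> int \<Rightarrow> complex" where
  "galerkin_rhs m t u k =
     (if \<bar>k\<bar> \<le> int m then
        (1/2) * \<i> * of_int k *
        (\<Sum>(k1, k2) \<in> {(k1, k2). k1 + k2 = k \<and> k1 \<in> Z0 \<and> k2 \<in> Z0 \<and>
                                  \<bar>k1\<bar> \<le> int m \<and> \<bar>k2\<bar> \<le> int m}.
           exp (3 * \<i> * of_int k * of_int k1 * of_int k2 * of_real t) * u k1 * u k2)
      else 0)"

definition galerkin_solution ::
  "nat \<Rightarrow> real \<Rightarrow> real \<Rightarrow> (int \<Rightarrow> complex) \<Rightarrow> (real \<Rightarrow> int \<Rightarrow> complex) \<Rightarrow> bool" where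
  "galerkin_solution m T s0 v0 v \<longleftrightarrow>
     (\<forall>k\<in>Z0. v 0 k = v0 k) \<and>
     (\<forall>t\<in>{0..T}. in_Hdot s0 (v t)) \<and>
     (\<forall>k\<in>Z0. \<forall>t\<in>{0..T}.
        ((\<lambda>\<tau>. v \<tau> k) has_vector_derivative galerkin_rhs m t (v t) k) (at t within {0..T}))"

definition time_deriv :: "real \<Rightarrow> (real \<Rightarrow> int \<Rightarrow> complex) \<Rightarrow> real \<Rightarrow> int \<Rightarrow> complex" where
  "time_deriv T v t k = vector_derivative (\<lambda>\<tau>. v \<tau> k) (at t within {0..T})"

end

theory Submission
  imports Defs
begin

definition KK :: "nat \<Rightarrow> int set" where
  "KK m = {k. k \<in> Z0 \<and> \<bar>k\<bar> \<le> int m}"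

definition PP :: "nat \<Rightarrow> int \<Rightarrow> (int \<times> int) set" where
  "PP m k = {(k1, k2). k1 + k2 = k \<and> k1 \<in> Z0 \<and> k2 \<in> Z0 \<and> \<bar>k1\<bar> \<le> int m \<and> \<bar>k2\<bar> \<le> int m}"

lemma finite_KK: "finite (KK m)"
  by (rule finite_subset[of _ "{-int m..int m}"]) (auto simp: KK_def)

lemma finite_PP: "finite (PP m k)"
  by (rule finite_subset[of _ "{-int m..int m} \<times> {-int m..int m}"]) (auto simp: PP_def)

lemma rhs_eq: "galerkin_rhs m t u k = (if \<bar>k\<bar> \<le> int m then (1/2) * \<i> * of_int k *
   (\<Sum>(k1, k2) \<in> PP m k. exp (3 * \<i> * of_int k * of_int k1 * of_int k2 * of_real t) * u k1 * u k2) else 0)"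
  unfolding galerkin_rhs_def PP_def by simp

lemma rhs_real:
  assumes w: "\<forall>k\<in>Z0. w (-k) = cnj (w k)"
  shows "galerkin_rhs m t w (-k) = cnj (galerkin_rhs m t w k)"
proof -
  have img: "PP m (-k) = (\<lambda>(a,b). (-a,-b)) ` PP m k"
  proof
    show "PP m (-k) \<subseteq> (\<lambda>(a,b). (-a,-b)) ` PP m k"
    proof
      fix x assume x: "x \<in> PP m (-k)"
      then obtain a b where ab: "x = (a,b)" by (cases x)
      have "(-a,-b) \<in> PP m k" using x ab by (auto simp: PP_def Z0_def)
      then show "x \<in> (\<lambda>(a,b). (-a,-b)) ` PP m k" using ab by force
    qed
    show "(\<lambda>(a,b). (-a,-b)) ` PP m k \<subseteq> PP m (-k)" by (auto simp: PP_def Z0_def)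
  qed
  have inj: "inj_on (\<lambda>(a,b). (-a,-b::int)) (PP m k)" by (auto simp: inj_on_def)
  have "(\<Sum>(k1, k2) \<in> PP m (-k). exp (3 * \<i> * of_int (-k) * of_int k1 * of_int k2 * of_real t) * w k1 * w k2)
      = (\<Sum>(k1, k2) \<in> PP m k. exp (3 * \<i> * of_int (-k) * of_int (-k1) * of_int (-k2) * of_real t) * w (-k1) * w (-k2))"
    unfolding img by (subst sum.reindex[OF inj]) (simp add: case_prod_unfold)
  also have "\<dots> = (\<Sum>(k1, k2) \<in> PP m k. cnj (exp (3 * \<i> * of_int k * of_int k1 * of_int k2 * of_real t) * w k1 * w k2))"
  proof (rule sum.cong[OF refl])
    fix x assume x: "x \<in> PP m k"
    then obtain a b where ab: "x = (a,b)" "a \<in> Z0" "b \<in> Z0" by (auto simp: PP_def)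
    show "(case x of (k1, k2) \<Rightarrow> exp (3 * \<i> * of_int (-k) * of_int (-k1) * of_int (-k2) * of_real t) * w (-k1) * w (-k2))
       = (case x of (k1, k2) \<Rightarrow> cnj (exp (3 * \<i> * of_int k * of_int k1 * of_int k2 * of_real t) * w k1 * w k2))"
      using ab w by (simp add: exp_cnj)
  qed
  also have "\<dots> = cnj (\<Sum>(k1, k2) \<in> PP m k. exp (3 * \<i> * of_int k * of_int k1 * of_int k2 * of_real t) * w k1 * w k2)"
    by (simp add: case_prod_unfold)
  finally show ?thesis unfolding rhs_eq by simp
qed

definition AA :: "nat \<Rightarrow> (int \<times> int \<times> int) set" where
  "AA m = {(a,b,c). a \<in> KK m \<and> b \<in> KK m \<and> c \<in> KK m \<and> a + b + c = 0}"

lemma finite_AA: "finite (AA m)"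
  by (rule finite_subset[of _ "KK m \<times> KK m \<times> KK m"]) (auto simp: AA_def finite_KK)

lemma sym_sum:
  fixes g :: "int \<Rightarrow> int \<Rightarrow> int \<Rightarrow> complex"
  assumes g1: "\<And>a b c. g a b c = g c b a" and g2: "\<And>a b c. g a b c = g a c b"
  shows "(\<Sum>(a,b,c)\<in>AA m. of_int c * g a b c) = 0"
proof -
  let ?X = "\<lambda>f. (\<Sum>(a,b,c)\<in>AA m. f a b c * g a b c)"
  have b1: "bij_betw (\<lambda>(a,b,c). (c,b,a)) (AA m) (AA m)"
    by (rule bij_betwI[where g="\<lambda>(a,b,c). (c,b,a)"]) (auto simp: AA_def)
  have b2: "bij_betw (\<lambda>(a,b,c). (a,c,b)) (AA m) (AA m)"
    by (rule bij_betwI[where g="\<lambda>(a,b,c). (a,c,b)"]) (auto simp: AA_def)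
  have e1: "?X (\<lambda>a b c. of_int c) = ?X (\<lambda>a b c. of_int a)"
    using sum.reindex_bij_betw[OF b1, of "\<lambda>(a,b,c). of_int c * g a b c"]
    by (simp add: case_prod_unfold g1[symmetric])
  have e2: "?X (\<lambda>a b c. of_int c) = ?X (\<lambda>a b c. of_int b)"
    using sum.reindex_bij_betw[OF b2, of "\<lambda>(a,b,c). of_int c * g a b c"]
    by (simp add: case_prod_unfold g2[symmetric])
  have "?X (\<lambda>a b c. of_int a) + ?X (\<lambda>a b c. of_int b) + ?X (\<lambda>a b c. of_int c)
      = (\<Sum>(a,b,c)\<in>AA m. of_int (a + b + c) * g a b c)"
    by (simp add: sum.distrib[symmetric] case_prod_unfold algebra_simps)
  also have "\<dots> = 0" by (rule sum.neutral) (auto simp: AA_def simp del: of_int_add)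
  finally show ?thesis using e1 e2 by simp
qed

lemma key_sum:
  "(\<Sum>k\<in>KK m. galerkin_rhs m t w k * w (-k)) = 0"
proof -
  define g where "g a b c = exp (- 3 * \<i> * of_int a * of_int b * of_int c * of_real t) * w a * w b * w c" for a b c
  have "(\<Sum>k\<in>KK m. galerkin_rhs m t w k * w (-k))
     = (\<Sum>k\<in>KK m. \<Sum>(a,b)\<in>PP m k. (1/2) * \<i> * of_int k * (exp (3 * \<i> * of_int k * of_int a * of_int b * of_real t) * w a * w b) * w (-k))"
    by (rule sum.cong[OF refl]) (auto simp: rhs_eq KK_def sum_distrib_left sum_distrib_right case_prod_unfold mult.assoc)
  also have "\<dots> = (\<Sum>(k,a,b)\<in>Sigma (KK m) (PP m). (1/2) * \<i> * of_int k * (exp (3 * \<i> * of_int k * of_int a * of_int b * of_real t) * w a * w b) * w (-k))"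
    by (subst sum.Sigma) (auto simp: finite_KK finite_PP case_prod_unfold)
  also have "\<dots> = (\<Sum>(a,b,c)\<in>AA m. (1/2) * \<i> * of_int (-c) * (exp (3 * \<i> * of_int (-c) * of_int a * of_int b * of_real t) * w a * w b) * w (-(-c)))"
  proof -
    have bij: "bij_betw (\<lambda>(a,b,c). (-c,a,b)) (AA m) (Sigma (KK m) (PP m))"
      by (rule bij_betwI[where g="\<lambda>(k,a,b). (a,b,-k)"]) (auto simp: AA_def KK_def PP_def Z0_def)
    show ?thesis using sum.reindex_bij_betw[OF bij, of "\<lambda>(k,a,b). (1/2) * \<i> * of_int k * (exp (3 * \<i> * of_int k * of_int a * of_int b * of_real t) * w a * w b) * w (-k)", symmetric]
      by (simp add: case_prod_unfold)
  qed
  also have "\<dots> = (-(1/2) * \<i>) * (\<Sum>(a,b,c)\<in>AA m. of_int c * g a b c)"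
    by (simp add: sum_distrib_left case_prod_unfold g_def algebra_simps)
  also have "\<dots> = 0"
    by (subst sym_sum) (auto simp: g_def algebra_simps)
  finally show ?thesis .
qed

lemma deriv_zero:
  assumes w: "\<forall>k\<in>Z0. w (-k) = cnj (w k)"
  shows "(\<Sum>k\<in>KK m. w k * cnj (galerkin_rhs m t w k) + galerkin_rhs m t w k * cnj (w k)) = 0"
proof -
  let ?R = "galerkin_rhs m t w"
  have "(\<Sum>k\<in>KK m. w k * cnj (?R k) + ?R k * cnj (w k))
      = (\<Sum>k\<in>KK m. w k * ?R (-k)) + (\<Sum>k\<in>KK m. ?R k * w (-k))"
    unfolding sum.distrib[symmetric]
    by (rule sum.cong[OF refl]) (auto simp: KK_def rhs_real[OF w] w)
  also have "(\<Sum>k\<in>KK m. w k * ?R (-k)) = (\<Sum>k\<in>KK m. ?R k * w (-k))"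
  proof -
    have bij: "bij_betw uminus (KK m) (KK m)"
      by (rule bij_betwI[where g=uminus]) (auto simp: KK_def Z0_def)
    show ?thesis using sum.reindex_bij_betw[OF bij, of "\<lambda>k. w k * ?R (-k)"]
      by (simp add: mult.commute)
  qed
  finally show ?thesis using key_sum[of m t w] by simp
qed

lemma conservation:
  assumes sol: "galerkin_solution m T s0 v0 v" and t: "t \<in> {0..T}"
  shows "(\<Sum>k\<in>KK m. (cmod (v t k))\<^sup>2) = (\<Sum>k\<in>KK m. (cmod (v0 k))\<^sup>2)"
proof -
  define F where "F \<tau> = (\<Sum>k\<in>KK m. v \<tau> k * cnj (v \<tau> k))" for \<tau>
  have "\<exists>c. \<forall>x\<in>{0..T}. F x = c"
  proof (rule has_derivative_zero_constant)
    fix x assume x: "x \<in> {0..T}"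
    have re: "\<forall>k\<in>Z0. v x (-k) = cnj (v x k)"
      using sol x by (auto simp: galerkin_solution_def in_Hdot_def)
    have d: "\<And>k. k \<in> KK m \<Longrightarrow> ((\<lambda>\<tau>. v \<tau> k) has_vector_derivative galerkin_rhs m x (v x) k) (at x within {0..T})"
      using sol x by (auto simp: galerkin_solution_def KK_def)
    have "(F has_vector_derivative (\<Sum>k\<in>KK m. v x k * cnj (galerkin_rhs m x (v x) k) + galerkin_rhs m x (v x) k * cnj (v x k))) (at x within {0..T})"
      unfolding F_def
      by (intro has_vector_derivative_sum has_vector_derivative_mult has_vector_derivative_cnj d)
    then have "(F has_vector_derivative 0) (at x within {0..T})"
      using deriv_zero[OF re] by simp
    then show "(F has_derivative (\<lambda>h. 0)) (at x within {0..T})"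
      by (simp add: has_vector_derivative_def)
  qed (simp)
  then obtain c where c: "\<forall>x\<in>{0..T}. F x = c" by blast
  have T0: "0 \<in> {0..T}" using t by auto
  have "F t = F 0" using c t T0 by simp
  moreover have "\<And>x. F x = of_real (\<Sum>k\<in>KK m. (cmod (v x k))\<^sup>2)"
    unfolding F_def of_real_sum complex_norm_square ..
  moreover have "(\<Sum>k\<in>KK m. (cmod (v 0 k))\<^sup>2) = (\<Sum>k\<in>KK m. (cmod (v0 k))\<^sup>2)"
    using sol by (auto simp: galerkin_solution_def KK_def intro!: sum.cong)
  ultimately show ?thesis by (metis of_real_eq_iff)
qed

lemma proj_le:
  fixes f :: "int \<Rightarrow> real"
  assumes nn: "\<And>j. f j \<ge> 0"
  shows "(\<Sum>(a,b)\<in>PP m k. f a) \<le> (\<Sum>j\<in>KK m. f j)" and "(\<Sum>(a,b)\<in>PP m k. f b) \<le> (\<Sum>j\<in>KK m. f j)"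
proof -
  have i1: "inj_on fst (PP m k)" by (auto simp: inj_on_def PP_def)
  have i2: "inj_on snd (PP m k)" by (auto simp: inj_on_def PP_def)
  have "(\<Sum>(a,b)\<in>PP m k. f a) = (\<Sum>j\<in>fst ` PP m k. f j)"
    by (simp add: sum.reindex[OF i1] case_prod_unfold)
  also have "\<dots> \<le> (\<Sum>j\<in>KK m. f j)"
    by (rule sum_mono2[OF finite_KK]) (auto simp: PP_def KK_def nn)
  finally show "(\<Sum>(a,b)\<in>PP m k. f a) \<le> (\<Sum>j\<in>KK m. f j)" .
  have "(\<Sum>(a,b)\<in>PP m k. f b) = (\<Sum>j\<in>snd ` PP m k. f j)"
    by (simp add: sum.reindex[OF i2] case_prod_unfold)
  also have "\<dots> \<le> (\<Sum>j\<in>KK m. f j)"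
    by (rule sum_mono2[OF finite_KK]) (auto simp: PP_def KK_def nn)
  finally show "(\<Sum>(a,b)\<in>PP m k. f b) \<le> (\<Sum>j\<in>KK m. f j)" .
qed

lemma amgm: "(x::real) * y \<le> (x\<^sup>2 + y\<^sup>2) / 2"
proof -
  have "2 * x * y \<le> x\<^sup>2 + y\<^sup>2" by (rule sum_squares_bound)
  then show ?thesis by (simp add: field_simps)
qed

lemma rhs_bound:
  "cmod (galerkin_rhs m t w k) \<le> \<bar>real_of_int k\<bar> / 2 * (\<Sum>j\<in>KK m. (cmod (w j))\<^sup>2)"
proof (cases "\<bar>k\<bar> \<le> int m")
  case False
  then show ?thesis by (simp add: rhs_eq sum_nonneg)
next
  case True
  let ?E = "\<Sum>j\<in>KK m. (cmod (w j))\<^sup>2"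
  have nexp: "cmod (exp (3 * \<i> * of_int k * of_int a * of_int b * of_real t)) = 1" for a b :: int
  proof -
    have "3 * \<i> * of_int k * of_int a * of_int b * of_real t = \<i> * of_real (3 * k * a * b * t)"
      by simp
    then show ?thesis by (simp only: norm_exp_i_times)
  qed
  have "cmod (\<Sum>(k1, k2) \<in> PP m k. exp (3 * \<i> * of_int k * of_int k1 * of_int k2 * of_real t) * w k1 * w k2)
      \<le> (\<Sum>(k1, k2) \<in> PP m k. cmod (exp (3 * \<i> * of_int k * of_int k1 * of_int k2 * of_real t) * w k1 * w k2))"
    by (rule order_trans[OF norm_sum]) (simp add: case_prod_unfold)
  also have "\<dots> = (\<Sum>(a,b) \<in> PP m k. cmod (w a) * cmod (w b))"
    by (rule sum.cong[OF refl]) (auto simp: norm_mult nexp)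
  also have "\<dots> \<le> (\<Sum>(a,b) \<in> PP m k. ((cmod (w a))\<^sup>2 + (cmod (w b))\<^sup>2) / 2)"
  proof (rule sum_mono)
    fix x assume "x \<in> PP m k"
    show "(case x of (a, b) \<Rightarrow> cmod (w a) * cmod (w b)) \<le> (case x of (a, b) \<Rightarrow> ((cmod (w a))\<^sup>2 + (cmod (w b))\<^sup>2) / 2)"
      using amgm[of "cmod (w (fst x))" "cmod (w (snd x))"] by (cases x) simp
  qed
  also have "\<dots> = ((\<Sum>(a,b) \<in> PP m k. (cmod (w a))\<^sup>2) + (\<Sum>(a,b) \<in> PP m k. (cmod (w b))\<^sup>2)) / 2"
    by (simp add: sum.distrib[symmetric] sum_divide_distrib case_prod_unfold)
  also have "\<dots> \<le> (?E + ?E) / 2"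
    using proj_le[of "\<lambda>j. (cmod (w j))\<^sup>2" m k] by simp
  finally have "cmod (\<Sum>(k1, k2) \<in> PP m k. exp (3 * \<i> * of_int k * of_int k1 * of_int k2 * of_real t) * w k1 * w k2) \<le> ?E"
    by simp
  moreover have "cmod (galerkin_rhs m t w k) = \<bar>real_of_int k\<bar> / 2 * cmod (\<Sum>(k1, k2) \<in> PP m k. exp (3 * \<i> * of_int k * of_int k1 * of_int k2 * of_real t) * w k1 * w k2)"
    using True unfolding rhs_eq by (simp add: norm_mult)
  ultimately show ?thesis by (simp add: mult_left_mono)
qed

lemma KK_powr_bound:
  assumes p: "p > 1"
  shows "(\<Sum>k\<in>KK m. \<bar>real_of_int k\<bar> powr (-p)) \<le> 2 * (\<Sum>n. real n powr (-p))"
proof -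
  have summ: "summable (\<lambda>n. real n powr (-p))"
    using summable_real_powr_iff[of "-p"] p by simp
  have KKe: "KK m = int ` {1..m} \<union> (\<lambda>n. - int n) ` {1..m}"
  proof
    show "KK m \<subseteq> int ` {1..m} \<union> (\<lambda>n. - int n) ` {1..m}"
    proof
      fix k assume k: "k \<in> KK m"
      show "k \<in> int ` {1..m} \<union> (\<lambda>n. - int n) ` {1..m}"
      proof (cases "k > 0")
        case True
        then have "k = int (nat k)" "nat k \<in> {1..m}" using k by (auto simp: KK_def)
        then show ?thesis by blast
      next
        case False
        then have "k = - int (nat (-k))" "nat (-k) \<in> {1..m}" using k by (auto simp: KK_def Z0_def)
        then show ?thesis by blast
      qed
    qed
    show "int ` {1..m} \<union> (\<lambda>n. - int n) ` {1..m} \<subseteq> KK m" by (auto simp: KK_def Z0_def)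
  qed
  have disj: "int ` {1..m} \<inter> (\<lambda>n. - int n) ` {1..m} = {}" by auto
  have i1: "inj_on int {1..m}" by (auto simp: inj_on_def)
  have i2: "inj_on (\<lambda>n. - int n) {1..m}" by (auto simp: inj_on_def)
  have "(\<Sum>k\<in>KK m. \<bar>real_of_int k\<bar> powr (-p))
      = (\<Sum>k\<in>int ` {1..m}. \<bar>real_of_int k\<bar> powr (-p)) + (\<Sum>k\<in>(\<lambda>n. - int n) ` {1..m}. \<bar>real_of_int k\<bar> powr (-p))"
    unfolding KKe by (rule sum.union_disjoint) (auto)
  also have "\<dots> = (\<Sum>n\<in>{1..m}. real n powr (-p)) + (\<Sum>n\<in>{1..m}. real n powr (-p))"
    unfolding sum.reindex[OF i1] sum.reindex[OF i2] by (simp add: o_def)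
  also have "\<dots> \<le> (\<Sum>n. real n powr (-p)) + (\<Sum>n. real n powr (-p))"
    using sum_le_suminf[OF summ, of "{1..m}"] by simp
  finally show ?thesis by simp
qed

lemma E0_le:
  assumes s0: "s0 \<ge> 0" and v0: "in_Hdot s0 v0"
  shows "(\<Sum>k\<in>KK m. (cmod (v0 k))\<^sup>2) \<le> hdot_norm_sq 0 v0"
proof -
  have eq: "\<And>k. k \<in> Z0 \<Longrightarrow> \<bar>real_of_int k\<bar> powr (2 * 0) * (cmod (v0 k))\<^sup>2 = (cmod (v0 k))\<^sup>2"
    by (auto simp: Z0_def)
  have le: "(cmod (v0 k))\<^sup>2 \<le> \<bar>real_of_int k\<bar> powr (2 * s0) * (cmod (v0 k))\<^sup>2" if "k \<in> Z0" for k
  proof -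
    have "\<bar>real_of_int k\<bar> \<ge> 1" using that by (auto simp: Z0_def)
    then have "1 \<le> \<bar>real_of_int k\<bar> powr (2 * s0)" using s0 by (simp add: ge_one_powr_ge_zero)
    from mult_right_mono[OF this, of "(cmod (v0 k))\<^sup>2"] show ?thesis by simp
  qed
  have sz: "(\<lambda>k. (cmod (v0 k))\<^sup>2) summable_on Z0"
    by (rule summable_on_comparison_test[OF _ le]) (use v0 in \<open>auto simp: in_Hdot_def\<close>)
  have "(\<Sum>k\<in>KK m. (cmod (v0 k))\<^sup>2) = infsum (\<lambda>k. (cmod (v0 k))\<^sup>2) (KK m)"
    by (simp add: finite_KK)
  also have "\<dots> \<le> infsum (\<lambda>k. (cmod (v0 k))\<^sup>2) Z0"
    by (rule infsum_mono_neutral[OF summable_on_finite[OF finite_KK] sz]) (auto simp: KK_def Z0_def)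
  also have "\<dots> = hdot_norm_sq 0 v0"
    unfolding hdot_norm_sq_def by (rule infsum_cong, rule eq[symmetric])
  finally show ?thesis .
qed

theorem proposition4p5:
  fixes S :: real
  assumes "S > 3/2"
  shows "\<exists>C::real. \<forall>(T::real) (s0::real) (m::nat) v0 v.
           T > 0 \<longrightarrow> s0 \<ge> 0 \<longrightarrow> in_Hdot s0 v0 \<longrightarrow> galerkin_solution m T s0 v0 v \<longrightarrow>
           (\<forall>t\<in>{0..T}. in_Hdot (-S) (time_deriv T v t) \<and>
              hdot_norm (-S) (time_deriv T v t) \<le> C * (hdot_norm 0 v0)\<^sup>2)"
proof -
  define p where "p = 2 * S - 2"
  have p1: "p > 1" using assms by (simp add: p_def)
  define C0 where "C0 = 2 * (\<Sum>n. real n powr (-p))"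
  have C0: "\<And>m. (\<Sum>k\<in>KK m. \<bar>real_of_int k\<bar> powr (-p)) \<le> C0"
    unfolding C0_def by (rule KK_powr_bound[OF p1])
  have C0nn: "C0 \<ge> 0" using C0[of 0] by (simp add: KK_def Z0_def)
  show ?thesis
  proof (intro exI[of _ "sqrt C0 / 2"] allI impI ballI)
    fix T s0 :: real and m :: nat and v0 v t
    assume T: "T > 0" and s0: "s0 \<ge> 0" and v0: "in_Hdot s0 v0" and sol: "galerkin_solution m T s0 v0 v"
      and t: "t \<in> {0..T}"
    define R where "R = galerkin_rhs m t (v t)"
    define D where "D = time_deriv T v t"
    have DR: "D k = R k" if "k \<in> Z0" for k
    proof -
      have "((\<lambda>\<tau>. v \<tau> k) has_vector_derivative R k) (at t within {0..T})"
        using sol t that by (auto simp: galerkin_solution_def R_def)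
      then show ?thesis unfolding D_def time_deriv_def
        by (rule vector_derivative_within_closed_interval[OF T t])
    qed
    have re: "\<forall>k\<in>Z0. v t (-k) = cnj (v t k)"
      using sol t by (auto simp: galerkin_solution_def in_Hdot_def)
    have Dre: "\<forall>k\<in>Z0. D (-k) = cnj (D k)"
    proof
      fix k assume k: "k \<in> Z0"
      then have "-k \<in> Z0" by (auto simp: Z0_def)
      then show "D (-k) = cnj (D k)" using DR k rhs_real[OF re] by (simp add: R_def)
    qed
    define f where "f k = \<bar>real_of_int k\<bar> powr (2 * - S) * (cmod (D k))\<^sup>2" for k
    have f0: "f k = 0" if "k \<in> Z0 - KK m" for k
    proof -
      have "\<not> \<bar>k\<bar> \<le> int m" "k \<in> Z0" using that by (auto simp: KK_def)
      then show ?thesis by (simp add: f_def DR R_def rhs_eq)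
    qed
    have "f summable_on KK m" by (rule summable_on_finite[OF finite_KK])
    then have summ: "f summable_on Z0"
      using summable_on_cong_neutral[of "KK m" Z0 f f] f0 by (auto simp: KK_def)
    have "infsum f Z0 = infsum f (KK m)"
      using infsum_cong_neutral[of "KK m" Z0 f f] f0 by (auto simp: KK_def)
    then have inf: "infsum f Z0 = (\<Sum>k\<in>KK m. f k)" by (simp add: finite_KK)
    let ?E = "\<Sum>j\<in>KK m. (cmod (v t j))\<^sup>2"
    have Enn: "?E \<ge> 0" by (simp add: sum_nonneg)
    have fb: "f k \<le> ?E\<^sup>2 / 4 * \<bar>real_of_int k\<bar> powr (-p)" if "k \<in> KK m" for k
    proof -
      have k: "k \<in> Z0" "\<bar>real_of_int k\<bar> > 0" using that by (auto simp: KK_def Z0_def)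
      have "cmod (D k) \<le> \<bar>real_of_int k\<bar> / 2 * ?E"
        using rhs_bound[of m t "v t" k] DR[OF k(1)] by (simp add: R_def)
      then have "(cmod (D k))\<^sup>2 \<le> (\<bar>real_of_int k\<bar> / 2 * ?E)\<^sup>2"
        by (simp add: power_mono)
      then have "f k \<le> \<bar>real_of_int k\<bar> powr (2 * - S) * (\<bar>real_of_int k\<bar> / 2 * ?E)\<^sup>2"
        unfolding f_def by (rule mult_left_mono) simp
      also have "\<dots> = ?E\<^sup>2 / 4 * (\<bar>real_of_int k\<bar> powr (2 * - S) * \<bar>real_of_int k\<bar> powr 2)"
        using k(2) by (simp add: power_mult_distrib powr_realpow[of _ 2] power2_eq_square)
      also have "\<bar>real_of_int k\<bar> powr (2 * - S) * \<bar>real_of_int k\<bar> powr 2 = \<bar>real_of_int k\<bar> powr (-p)"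
      proof -
        have "2 * - S + 2 = -p" by (simp add: p_def)
        then show ?thesis by (simp only: powr_add[symmetric])
      qed
      finally show ?thesis .
    qed
    have "infsum f Z0 \<le> (\<Sum>k\<in>KK m. ?E\<^sup>2 / 4 * \<bar>real_of_int k\<bar> powr (-p))"
      unfolding inf by (rule sum_mono) (rule fb)
    also have "\<dots> = ?E\<^sup>2 / 4 * (\<Sum>k\<in>KK m. \<bar>real_of_int k\<bar> powr (-p))"
      by (simp add: sum_distrib_left)
    also have "\<dots> \<le> ?E\<^sup>2 / 4 * C0"
      by (rule mult_left_mono[OF C0]) simp
    finally have b1: "infsum f Z0 \<le> ?E\<^sup>2 / 4 * C0" .
    define N where "N = hdot_norm_sq 0 v0"
    have EN: "?E \<le> N" unfolding N_def
      using conservation[OF sol t] E0_le[OF s0 v0, of m] by simp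
    have Nn: "(hdot_norm 0 v0)\<^sup>2 = N"
      using EN Enn by (simp add: hdot_norm_def N_def)
    have "hdot_norm (-S) D = sqrt (infsum f Z0)"
      by (simp add: hdot_norm_def hdot_norm_sq_def f_def[abs_def])
    also have "\<dots> \<le> sqrt (?E\<^sup>2 / 4 * C0)" using b1 by simp
    also have "\<dots> = ?E / 2 * sqrt C0"
      using Enn by (simp add: real_sqrt_mult real_sqrt_divide)
    also have "\<dots> \<le> N / 2 * sqrt C0"
      using EN C0nn by (simp add: mult_right_mono)
    finally have "hdot_norm (-S) D \<le> sqrt C0 / 2 * (hdot_norm 0 v0)\<^sup>2"
      unfolding Nn by (simp add: mult.commute)
    moreover have "in_Hdot (-S) D"
      using Dre summ by (simp add: in_Hdot_def f_def[abs_def])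
    ultimately show "in_Hdot (- S) (time_deriv T v t) \<and>
       hdot_norm (- S) (time_deriv T v t) \<le> sqrt C0 / 2 * (hdot_norm 0 v0)\<^sup>2"
      by (simp add: D_def)
  qed
qed

end
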